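(* Let $(\Omega,\Sigma,\mu)$ be a measure space with $\mu$ a positive countably additive measure, let $\rho:\Omega\to[0,\infty)$ be measurable, and let $f,g_1,\dots,g_n,h$ be real-valued measurable functions on $\Omega$ with $\int_\Omega\rho|u|^2\,d\mu<\infty$ for each $u\in\{f,g_1,\dots,g_n,h\}$. Writing $\int_\Omega\rho uv\,d\mu$ for $\int_\Omega\rho(s)u(s)v(s)\,d\mu(s)$, we have \[ \sum_{i=1}^n\begin{vmatrix}\int_\Omega\rho fg_i\,d\mu & \int_\Omega\rho fh\,d\mu\\ \int_\Omega\rho g_ih\,d\mu & \int_\Omega\rho h^2\,d\mu\end{vmatrix}^2 \le \begin{vmatrix}\int_\Omega\rho f^2\,d\mu & \int_\Omega\rho fh\,d\mu\\ \int_\Omega\rho fh\,d\mu & \int_\Omega\rho h^2\,d\mu\end{vmatrix} \times\left\{\max_{1\le i\le n}\begin{vmatrix}\int_\Omega\rho g_i^2\,d\mu & \int_\Omega\rho g_ih\,d\mu\\ \int_\Omega\rho g_ih\,d\mu & \int_\Omega\rho h^2\,d\mu\end{vmatrix} +\Bigg(\sum_{1\le i\ne j\le n}\begin{vmatrix}\int_\Omega\rho g_jg_i\,d\mu & \int_\Omega\rho g_jh\,d\mu\\ \int_\Omega\rho g_ih\,d\mu & \int_\Omega\rho h^2\,d\mu\end{vmatrix}^2\Bigg)^{1/2}\right\}. \]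
   Context: $\begin{vmatrix}a&b\\c&d\end{vmatrix}=ad-bc$ denotes a $2\times2$ determinant. The sum $\sum_{1\le i\ne j\le n}$ runs over all ordered pairs $(i,j)$ with $i\ne j$. *)

theory Defs
  imports "HOL-Analysis.Analysis"
begin

definition wip :: "'a measure \<Rightarrow> ('a \<Rightarrow> real) \<Rightarrow> ('a \<Rightarrow> real) \<Rightarrow> ('a \<Rightarrow> real) \<Rightarrow> real" where
  "wip M \<rho> u v = (\<integral>s. \<rho> s * u s * v s \<partial>M)"

definition det2 :: "real \<Rightarrow> real \<Rightarrow> real \<Rightarrow> real \<Rightarrow> real" where
  "det2 a b c d = a * d - b * c"

end

theory Submission imports Defs begin

lemma quad_disc:
  fixes A B C :: real
  assumes C: "C \<ge> 0" and H: "\<And>t. 0 \<le> A - 2*t*B + t^2*C"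
  shows "B^2 \<le> A*C"
proof (cases "C = 0")
  case True
  have "B = 0"
  proof (rule ccontr)
    assume "B \<noteq> 0"
    have "0 \<le> A - 2*((A+1)/(2*B))*B" using H[of "(A+1)/(2*B)"] True by simp
    also have "\<dots> = -1" using \<open>B \<noteq> 0\<close> by (simp add: field_simps)
    finally show False by simp
  qed
  then show ?thesis using True by simp
next
  case False
  then have Cp: "C > 0" using C by simp
  have "0 \<le> A - 2*(B/C)*B + (B/C)^2*C" by (rule H)
  also have "\<dots> = A - B^2/C" using Cp by (simp add: field_simps power2_eq_square)
  finally have "B^2/C \<le> A" by simp
  then show ?thesis using Cp by (simp add: field_simps)
qed

locale wset =
  fixes M :: "'a measure" and \<rho> :: "'a \<Rightarrow> real" and h :: "'a \<Rightarrow> real"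
  assumes rho_meas: "\<rho> \<in> borel_measurable M"
    and rho_nn: "\<And>s. s \<in> space M \<Longrightarrow> \<rho> s \<ge> 0"
    and h_meas: "h \<in> borel_measurable M"
    and h_int: "integrable M (\<lambda>s. \<rho> s * (h s)^2)"
begin

definition V where "V = {u. u \<in> borel_measurable M \<and> integrable M (\<lambda>s. \<rho> s * (u s)^2)}"

definition D where "D u v = det2 (wip M \<rho> u v) (wip M \<rho> u h) (wip M \<rho> v h) (wip M \<rho> h h)"

lemma hV: "h \<in> V" using h_meas h_int by (simp add: V_def)

lemma int_prod:
  assumes "u \<in> V" "v \<in> V"
  shows "integrable M (\<lambda>s. \<rho> s * u s * v s)"
proof (rule Bochner_Integration.integrable_bound[where f="\<lambda>s. \<rho> s * (u s)^2 + \<rho> s * (v s)^2"])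
  show "integrable M (\<lambda>s. \<rho> s * (u s)^2 + \<rho> s * (v s)^2)"
    using assms by (simp add: V_def)
  have [measurable]: "u \<in> borel_measurable M" "v \<in> borel_measurable M" "\<rho> \<in> borel_measurable M"
    using assms rho_meas by (auto simp: V_def)
  show "(\<lambda>s. \<rho> s * u s * v s) \<in> borel_measurable M" by measurable
  show "AE x in M. norm (\<rho> x * u x * v x) \<le> norm (\<rho> x * (u x)^2 + \<rho> x * (v x)^2)"
  proof (rule AE_I2)
    fix x assume x: "x \<in> space M"
    have r: "\<rho> x \<ge> 0" using rho_nn[OF x] .
    have "\<bar>u x * v x\<bar> \<le> (u x)^2 + (v x)^2"
    proof -
      have "2 * \<bar>u x\<bar> * \<bar>v x\<bar> \<le> \<bar>u x\<bar>^2 + \<bar>v x\<bar>^2" by (rule sum_squares_bound)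
      moreover have "\<bar>u x * v x\<bar> \<le> 2 * \<bar>u x\<bar> * \<bar>v x\<bar>" by (simp add: abs_mult)
      ultimately show ?thesis by simp
    qed
    then have "\<rho> x * \<bar>u x * v x\<bar> \<le> \<rho> x * ((u x)^2 + (v x)^2)"
      using r by (rule mult_left_mono)
    moreover have "0 \<le> \<rho> x * ((u x)^2 + (v x)^2)" using r by simp
    ultimately show "norm (\<rho> x * u x * v x) \<le> norm (\<rho> x * (u x)^2 + \<rho> x * (v x)^2)"
      using r by (simp add: abs_mult distrib_left)
  qed
qed

lemma V_lin:
  assumes "u \<in> V" "v \<in> V"
  shows "(\<lambda>s. a * u s + b * v s) \<in> V"
proof -
  have i: "integrable M (\<lambda>s. a^2 * (\<rho> s * (u s)^2) + 2*a*b * (\<rho> s * u s * v s) + b^2 * (\<rho> s * (v s)^2))"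
    using assms int_prod[OF assms] by (simp add: V_def)
  have e: "(\<lambda>s. a^2 * (\<rho> s * (u s)^2) + 2*a*b * (\<rho> s * u s * v s) + b^2 * (\<rho> s * (v s)^2))
     = (\<lambda>s. \<rho> s * (a * u s + b * v s)^2)"
    by (rule ext) (simp add: power2_eq_square algebra_simps)
  have [measurable]: "u \<in> borel_measurable M" "v \<in> borel_measurable M" using assms by (auto simp: V_def)
  have "(\<lambda>s. a * u s + b * v s) \<in> borel_measurable M" by measurable
  then show ?thesis using i unfolding e by (simp add: V_def)
qed

lemma V_zero: "(\<lambda>s. 0) \<in> V" by (simp add: V_def)

lemma V_sum:
  assumes "finite K" "\<And>k. k \<in> K \<Longrightarrow> w k \<in> V"
  shows "(\<lambda>s. \<Sum>k\<in>K. a k * w k s) \<in> V"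
  using assms
proof (induction K rule: finite_induct)
  case empty then show ?case using V_zero by simp
next
  case (insert x F)
  have "(\<lambda>s. a x * w x s + 1 * (\<Sum>k\<in>F. a k * w k s)) \<in> V"
    using insert by (intro V_lin) auto
  then show ?case using insert by simp
qed

lemma wip_lin:
  assumes "u \<in> V" "v \<in> V" "w \<in> V"
  shows "wip M \<rho> (\<lambda>s. a * u s + b * v s) w = a * wip M \<rho> u w + b * wip M \<rho> v w"
proof -
  have "(\<lambda>s. \<rho> s * (a * u s + b * v s) * w s) = (\<lambda>s. a * (\<rho> s * u s * w s) + b * (\<rho> s * v s * w s))"
    by (rule ext) (simp add: algebra_simps)
  then show ?thesis unfolding wip_def using int_prod assms by simp
qed

lemma wip_sum:
  assumes "\<And>k. k \<in> K \<Longrightarrow> w k \<in> V" "v \<in> V"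
  shows "wip M \<rho> (\<lambda>s. \<Sum>k\<in>K. a k * w k s) v = (\<Sum>k\<in>K. a k * wip M \<rho> (w k) v)"
proof -
  have "(\<lambda>s. \<rho> s * (\<Sum>k\<in>K. a k * w k s) * v s) = (\<lambda>s. \<Sum>k\<in>K. a k * (\<rho> s * w k s * v s))"
    by (rule ext) (simp add: sum_distrib_left sum_distrib_right algebra_simps)
  then show ?thesis unfolding wip_def
    by (simp add: integral_sum int_prod assms)
qed

lemma wip_sym: "wip M \<rho> u v = wip M \<rho> v u"
  unfolding wip_def by (simp add: mult.commute mult.left_commute)

lemma wip_nn: "0 \<le> wip M \<rho> u u"
  unfolding wip_def by (rule integral_nonneg_AE) (rule AE_I2, metis mult.assoc mult_nonneg_nonneg rho_nn zero_le_square)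

lemma D_sym: "D u v = D v u"
  unfolding D_def det2_def using wip_sym by (simp add: mult.commute)

lemma D_lin:
  assumes "u \<in> V" "v \<in> V" "w \<in> V"
  shows "D (\<lambda>s. a * u s + b * v s) w = a * D u w + b * D v w"
  unfolding D_def det2_def using assms hV
  by (simp add: wip_lin algebra_simps)

lemma D_sum:
  assumes "\<And>k. k \<in> K \<Longrightarrow> w k \<in> V" "v \<in> V"
  shows "D (\<lambda>s. \<Sum>k\<in>K. a k * w k s) v = (\<Sum>k\<in>K. a k * D (w k) v)"
  unfolding D_def det2_def using assms hV
  by (simp add: wip_sum sum_distrib_left sum_distrib_right sum_subtractf algebra_simps)

lemma D_nn:
  assumes "u \<in> V"
  shows "0 \<le> D u u"
proof -
  have "(wip M \<rho> u h)^2 \<le> wip M \<rho> u u * wip M \<rho> h h"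
  proof (rule quad_disc[OF wip_nn])
    fix t
    have "0 \<le> wip M \<rho> (\<lambda>s. 1 * u s + (-t) * h s) (\<lambda>s. 1 * u s + (-t) * h s)" by (rule wip_nn)
    also have "\<dots> = 1 * wip M \<rho> u (\<lambda>s. 1 * u s + (-t) * h s) + (-t) * wip M \<rho> h (\<lambda>s. 1 * u s + (-t) * h s)"
      by (rule wip_lin[OF assms hV V_lin[OF assms hV]])
    also have "wip M \<rho> u (\<lambda>s. 1 * u s + (-t) * h s) = wip M \<rho> (\<lambda>s. 1 * u s + (-t) * h s) u"
      by (rule wip_sym)
    also have "\<dots> = 1 * wip M \<rho> u u + (-t) * wip M \<rho> h u"
      by (rule wip_lin[OF assms hV assms])
    also have "wip M \<rho> h (\<lambda>s. 1 * u s + (-t) * h s) = wip M \<rho> (\<lambda>s. 1 * u s + (-t) * h s) h"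
      by (rule wip_sym)
    also have "\<dots> = 1 * wip M \<rho> u h + (-t) * wip M \<rho> h h"
      by (rule wip_lin[OF assms hV hV])
    finally have "0 \<le> 1 * (1 * wip M \<rho> u u + (-t) * wip M \<rho> h u) + (-t) * (1 * wip M \<rho> u h + (-t) * wip M \<rho> h h)" .
    then
    show "0 \<le> wip M \<rho> u u - 2 * t * wip M \<rho> u h + t^2 * wip M \<rho> h h"
      using wip_sym[of h u] by (simp add: power2_eq_square algebra_simps)
  qed
  then show ?thesis unfolding D_def det2_def by (simp add: power2_eq_square)
qed

lemma bombieri:
  assumes n: "n \<ge> (1::nat)" and fV: "f \<in> V" and gV: "\<And>i. i \<in> {1..n} \<Longrightarrow> g i \<in> V"
  shows "(\<Sum>i=1..n. (D f (g i))^2)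
    \<le> D f f * ((MAX i\<in>{1..n}. D (g i) (g i))
       + sqrt (\<Sum>(i, j)\<in>{(i, j). i \<in> {1..n} \<and> j \<in> {1..n} \<and> i \<noteq> j}. (D (g j) (g i))^2))"
proof -
  define I where "I = {1..n}"
  define P where "P = {(i, j). i \<in> {1..n} \<and> j \<in> {1..n} \<and> i \<noteq> j}"
  define c where "c i = D f (g i)" for i
  define z where "z = (\<lambda>s. \<Sum>i\<in>I. c i * g i s)"
  define S where "S = (\<Sum>i\<in>I. (c i)^2)"
  define mx where "mx = (MAX i\<in>I. D (g i) (g i))"
  define Q where "Q = (\<Sum>(i, j)\<in>P. (D (g j) (g i))^2)"
  have fin: "finite I" unfolding I_def by simp
  have gV': "\<And>i. i \<in> I \<Longrightarrow> g i \<in> V" using gV unfolding I_def .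
  have zV: "z \<in> V" unfolding z_def using V_sum[OF fin gV'] .
  have S0: "S \<ge> 0" unfolding S_def by (simp add: sum_nonneg)
  have Dzf: "D z f = S"
  proof -
    have "D z f = (\<Sum>i\<in>I. c i * D (g i) f)" unfolding z_def by (rule D_sum[OF gV' fV])
    also have "\<dots> = S" unfolding S_def c_def
      by (rule sum.cong) (simp_all add: D_sym[of _ f] power2_eq_square)
    finally show ?thesis .
  qed
  have Dgz: "D (g i) z = (\<Sum>j\<in>I. c j * D (g j) (g i))" if "i \<in> I" for i
    using D_sym[of "g i" z] D_sum[OF gV' gV'[OF that]] unfolding z_def by simp
  have Dzz: "D z z = (\<Sum>i\<in>I. \<Sum>j\<in>I. c i * c j * D (g j) (g i))"
  proof -
    have "D z z = (\<Sum>i\<in>I. c i * D (g i) z)" unfolding z_def[of] by (rule D_sum[OF gV' zV[unfolded z_def]])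
    also have "\<dots> = (\<Sum>i\<in>I. \<Sum>j\<in>I. c i * c j * D (g j) (g i))"
      by (rule sum.cong) (simp_all add: Dgz sum_distrib_left mult.assoc)
    finally show ?thesis .
  qed
  have CS: "S^2 \<le> D f f * D z z"
  proof (rule quad_disc[OF D_nn[OF zV]])
    fix t
    define w where "w = (\<lambda>s. 1 * f s + (-t) * z s)"
    have wV: "w \<in> V" unfolding w_def by (rule V_lin[OF fV zV])
    have "0 \<le> D w w" by (rule D_nn[OF wV])
    also have "D w w = 1 * D f w + (-t) * D z w" unfolding w_def by (rule D_lin[OF fV zV wV[unfolded w_def]])
    also have "D f w = D w f" by (rule D_sym)
    also have "\<dots> = 1 * D f f + (-t) * D z f" unfolding w_def by (rule D_lin[OF fV zV fV])
    also have "D z w = D w z" by (rule D_sym)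
    also have "\<dots> = 1 * D f z + (-t) * D z z" unfolding w_def by (rule D_lin[OF fV zV zV])
    finally show "0 \<le> D f f - 2 * t * S + t^2 * D z z"
      using Dzf D_sym[of f z] by (simp add: power2_eq_square algebra_simps)
  qed
  have fin2: "finite (I \<times> I)" using fin by simp
  have IIdec: "I \<times> I = P \<union> (\<lambda>i. (i, i)) ` I" unfolding P_def I_def by auto
  have disj: "P \<inter> (\<lambda>i. (i, i)) ` I = {}" unfolding P_def by auto
  have finP: "finite P" using IIdec fin2 by (metis finite_Un)
  have PII: "P \<subseteq> I \<times> I" using IIdec by auto
  have "D z z = (\<Sum>(i, j)\<in>I \<times> I. c i * c j * D (g j) (g i))"
    unfolding Dzz by (simp add: sum.cartesian_product)
  also have "\<dots> = (\<Sum>(i, j)\<in>P. c i * c j * D (g j) (g i)) + (\<Sum>(i, j)\<in>(\<lambda>i. (i, i)) ` I. c i * c j * D (g j) (g i))"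
    unfolding IIdec using finP fin disj by (simp add: sum.union_disjoint)
  also have "(\<Sum>(i, j)\<in>(\<lambda>i. (i, i)) ` I. c i * c j * D (g j) (g i)) = (\<Sum>i\<in>I. (c i)^2 * D (g i) (g i))"
    by (subst sum.reindex) (auto simp: inj_on_def power2_eq_square)
  also have "\<dots> \<le> (\<Sum>i\<in>I. (c i)^2 * mx)"
  proof (rule sum_mono)
    fix i assume "i \<in> I"
    then have "D (g i) (g i) \<le> mx" unfolding mx_def using fin by (intro Max_ge) auto
    then show "(c i)^2 * D (g i) (g i) \<le> (c i)^2 * mx" by (rule mult_left_mono) simp
  qed
  also have "\<dots> = S * mx" unfolding S_def by (simp add: sum_distrib_right)
  also have "(\<Sum>(i, j)\<in>P. c i * c j * D (g j) (g i)) \<le> S * sqrt Q"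
  proof -
    let ?a = "\<lambda>p. c (fst p) * c (snd p)" and ?b = "\<lambda>p. D (g (snd p)) (g (fst p))"
    have e1: "(\<Sum>(i, j)\<in>P. c i * c j * D (g j) (g i)) = (\<Sum>p\<in>P. ?a p * ?b p)"
      by (simp add: case_prod_beta)
    have e2: "Q = (\<Sum>p\<in>P. (?b p)^2)" unfolding Q_def by (simp add: case_prod_beta)
    have "(\<Sum>p\<in>P. (?a p)^2) \<le> (\<Sum>p\<in>I \<times> I. (?a p)^2)"
      by (rule sum_mono2[OF fin2 PII]) simp
    also have "\<dots> = (\<Sum>i\<in>I. \<Sum>j\<in>I. (c i)^2 * (c j)^2)"
      by (simp add: sum.cartesian_product case_prod_beta power_mult_distrib)
    also have "\<dots> = S^2" unfolding S_def by (simp add: power2_eq_square sum_product)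
    finally have A: "(\<Sum>p\<in>P. (?a p)^2) \<le> S^2" .
    have "(\<Sum>p\<in>P. ?a p * ?b p)^2 \<le> (\<Sum>p\<in>P. (?a p)^2) * Q"
      unfolding e2 by (rule Cauchy_Schwarz_ineq_sum)
    also have "\<dots> \<le> S^2 * Q" using A e2 by (intro mult_right_mono) (auto simp: sum_nonneg)
    finally have "(\<Sum>p\<in>P. ?a p * ?b p) \<le> sqrt (S^2 * Q)" by (rule real_le_rsqrt)
    also have "\<dots> = S * sqrt Q" using S0 by (simp add: real_sqrt_mult)
    finally show ?thesis unfolding e1 .
  qed
  finally have Dzzb: "D z z \<le> S * (mx + sqrt Q)" by (simp add: algebra_simps)
  have Dff: "D f f \<ge> 0" by (rule D_nn[OF fV])
  have "1 \<in> I" using n unfolding I_def by simp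
  then have "D (g 1) (g 1) \<le> mx" unfolding mx_def using fin by (intro Max_ge) auto
  then have mx0: "mx \<ge> 0" using D_nn[OF gV'[OF \<open>1 \<in> I\<close>]] by linarith
  have "0 \<le> Q" unfolding Q_def by (rule sum_nonneg) (simp add: case_prod_beta)
  then have X0: "0 \<le> mx + sqrt Q" using mx0 by simp
  have main: "S \<le> D f f * (mx + sqrt Q)"
  proof (cases "S = 0")
    case True then show ?thesis using Dff X0 by simp
  next
    case False
    then have Sp: "S > 0" using S0 by simp
    have "S * S \<le> D f f * (S * (mx + sqrt Q))"
      using CS mult_left_mono[OF Dzzb Dff] by (simp add: power2_eq_square)
    then have "S * S \<le> S * (D f f * (mx + sqrt Q))" by (simp add: algebra_simps)
    then show ?thesis using Sp by simp
  qed
  then show ?thesis unfolding S_def c_def mx_def Q_def P_def I_def .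
qed

end

theorem proposition5p1:
  fixes M :: "'a measure" and \<rho> f h :: "'a \<Rightarrow> real" and g :: "nat \<Rightarrow> 'a \<Rightarrow> real" and n :: nat
  assumes "n \<ge> 1"
    and "\<rho> \<in> borel_measurable M" and "\<And>s. s \<in> space M \<Longrightarrow> \<rho> s \<ge> 0"
    and "f \<in> borel_measurable M" and "h \<in> borel_measurable M"
    and "\<And>i. i \<in> {1..n} \<Longrightarrow> g i \<in> borel_measurable M"
    and "integrable M (\<lambda>s. \<rho> s * \<bar>f s\<bar>^2)"
    and "integrable M (\<lambda>s. \<rho> s * \<bar>h s\<bar>^2)"
    and "\<And>i. i \<in> {1..n} \<Longrightarrow> integrable M (\<lambda>s. \<rho> s * \<bar>g i s\<bar>^2)"
  shows "(\<Sum>i=1..n. (det2 (wip M \<rho> f (g i)) (wip M \<rho> f h) (wip M \<rho> (g i) h) (wip M \<rho> h h))^2)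
    \<le> det2 (wip M \<rho> f f) (wip M \<rho> f h) (wip M \<rho> f h) (wip M \<rho> h h) *
      ((MAX i\<in>{1..n}. det2 (wip M \<rho> (g i) (g i)) (wip M \<rho> (g i) h) (wip M \<rho> (g i) h) (wip M \<rho> h h))
       + sqrt (\<Sum>(i, j)\<in>{(i, j). i \<in> {1..n} \<and> j \<in> {1..n} \<and> i \<noteq> j}.
            (det2 (wip M \<rho> (g j) (g i)) (wip M \<rho> (g j) h) (wip M \<rho> (g i) h) (wip M \<rho> h h))^2))"
proof -
  interpret wset M \<rho> h
    using assms(2,3,5,8) by unfold_locales simp_all
  have fV: "f \<in> V" using assms(4,7) by (simp add: V_def)
  have gV: "\<And>i. i \<in> {1..n} \<Longrightarrow> g i \<in> V" using assms(6,9) by (simp add: V_def)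
  show ?thesis using bombieri[OF assms(1) fV gV] unfolding D_def .
qed

end
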